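(* For any fitness graph $\mathcal{G}=(G,(m,r))$ and any seed sets $S\subseteq S'\subseteq V$, we have $\operatorname{fp}_{\mathcal{G}}(S)\le\operatorname{fp}_{\mathcal{G}}(S')$.
   Context: A fitness graph is $\mathcal{G}=(G,(m,r))$ where $G=(V,E,w)$ is a strongly connected directed graph, $w(u,\cdot)$ is a probability distribution over out-neighbours of $u$, and $r,m\colon V\to(0,\infty)$ are resident and mutant fitness functions. For a configuration (set of mutants) $X\subseteq V$, $f_X(u)=m(u)$ if $u\in X$, else $r(u)$. The Heterogeneous Moran process starts at $\mathcal{X}_0=S$; from $\mathcal{X}_t=X$ it picks $u$ with probability $f_X(u)/\sum_v f_X(v)$, then $v$ with probability $w(u,v)$, and $v$ takes the type of $u$. $\operatorname{fp}_{\mathcal{G}}(S)$ is the probability that the process eventually reaches $V$. *)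

theory Defs
  imports Main "HOL.Real"
begin

definition fitness_graph ::
  "'v set \<Rightarrow> ('v \<times> 'v) set \<Rightarrow> ('v \<Rightarrow> 'v \<Rightarrow> real) \<Rightarrow> ('v \<Rightarrow> real) \<Rightarrow> ('v \<Rightarrow> real) \<Rightarrow> bool"
  where "fitness_graph V E w r m \<longleftrightarrow>
     finite V \<and> V \<noteq> {} \<and> E \<subseteq> V \<times> V \<and>
     (\<forall>u\<in>V. \<forall>v\<in>V. w u v \<ge> 0 \<and> (w u v > 0 \<longleftrightarrow> (u, v) \<in> E)) \<and>
     (\<forall>u\<in>V. (\<Sum>v\<in>V. w u v) = 1) \<and>
     (\<forall>u\<in>V. \<forall>v\<in>V. (u, v) \<in> E\<^sup>*) \<and>
     (\<forall>u\<in>V. r u > 0 \<and> m u > 0)"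

definition fit :: "('v \<Rightarrow> real) \<Rightarrow> ('v \<Rightarrow> real) \<Rightarrow> 'v set \<Rightarrow> 'v \<Rightarrow> real"
  where "fit r m X u = (if u \<in> X then m u else r u)"

definition moran_update :: "'v set \<Rightarrow> 'v \<Rightarrow> 'v \<Rightarrow> 'v set"
  where "moran_update X u v = (if u \<in> X then insert v X else X - {v})"

definition trans_prob ::
  "'v set \<Rightarrow> ('v \<Rightarrow> 'v \<Rightarrow> real) \<Rightarrow> ('v \<Rightarrow> real) \<Rightarrow> ('v \<Rightarrow> real) \<Rightarrow> 'v set \<Rightarrow> 'v set \<Rightarrow> real"
  where "trans_prob V w r m X Y =
    (\<Sum>u\<in>V. \<Sum>v\<in>V. if moran_update X u v = Y
        then fit r m X u / (\<Sum>x\<in>V. fit r m X x) * w u v else 0)"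

fun hit_within ::
  "'v set \<Rightarrow> ('v \<Rightarrow> 'v \<Rightarrow> real) \<Rightarrow> ('v \<Rightarrow> real) \<Rightarrow> ('v \<Rightarrow> real) \<Rightarrow> nat \<Rightarrow> 'v set \<Rightarrow> real"
  where
    "hit_within V w r m 0 X = (if X = V then 1 else 0)"
  | "hit_within V w r m (Suc n) X =
       (if X = V then 1 else (\<Sum>Y\<in>Pow V. trans_prob V w r m X Y * hit_within V w r m n Y))"

definition fp ::
  "'v set \<Rightarrow> ('v \<Rightarrow> 'v \<Rightarrow> real) \<Rightarrow> ('v \<Rightarrow> real) \<Rightarrow> ('v \<Rightarrow> real) \<Rightarrow> 'v set \<Rightarrow> real"
  where "fp V w r m S = (SUP n. hit_within V w r m n S)"

end

theory Submission
  imports Defs Complex_Main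
begin

definition Fs :: "'v set \<Rightarrow> ('v \<Rightarrow> real) \<Rightarrow> ('v \<Rightarrow> real) \<Rightarrow> 'v set \<Rightarrow> real"
  where "Fs V r m X = (\<Sum>x\<in>V. fit r m X x)"

definition Tm :: "'v set \<Rightarrow> ('v \<Rightarrow> 'v \<Rightarrow> real) \<Rightarrow> ('v \<Rightarrow> real) \<Rightarrow> ('v \<Rightarrow> real) \<Rightarrow> ('v set \<Rightarrow> real) \<Rightarrow> 'v set \<Rightarrow> real"
  where "Tm V w r m \<phi> X = (\<Sum>u\<in>V. fit r m X u * (\<Sum>v\<in>V. w u v * \<phi> (moran_update X u v)))"

lemma fg_basic:
  assumes "fitness_graph V E w r m"
  shows "finite V" "V \<noteq> {}" "\<And>u v. u \<in> V \<Longrightarrow> v \<in> V \<Longrightarrow> w u v \<ge> 0"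
    "\<And>u. u \<in> V \<Longrightarrow> (\<Sum>v\<in>V. w u v) = 1"
    "\<And>u. u \<in> V \<Longrightarrow> r u > 0" "\<And>u. u \<in> V \<Longrightarrow> m u > 0"
  using assms unfolding fitness_graph_def by auto

lemma fit_pos: "u \<in> V \<Longrightarrow> fitness_graph V E w r m \<Longrightarrow> fit r m X u > 0"
  using fg_basic[of V E w r m] unfolding fit_def by auto

lemma Fs_pos: "fitness_graph V E w r m \<Longrightarrow> Fs V r m X > 0"
  unfolding Fs_def using fg_basic(1,2)[of V E w r m] fit_pos[of _ V E w r m X]
  by (intro sum_pos) auto

lemma upd_sub: "X \<subseteq> V \<Longrightarrow> v \<in> V \<Longrightarrow> moran_update X u v \<subseteq> V"
  unfolding moran_update_def by auto

lemma step_eq: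
  assumes fg: "fitness_graph V E w r m" and X: "X \<subseteq> V"
  shows "(\<Sum>Y\<in>Pow V. trans_prob V w r m X Y * \<phi> Y) = Tm V w r m \<phi> X / Fs V r m X"
proof -
  have fin: "finite V" using fg_basic[OF fg] by auto
  have "(\<Sum>Y\<in>Pow V. trans_prob V w r m X Y * \<phi> Y)
     = (\<Sum>Y\<in>Pow V. \<Sum>u\<in>V. \<Sum>v\<in>V. if moran_update X u v = Y
        then fit r m X u / Fs V r m X * w u v * \<phi> Y else 0)"
    unfolding trans_prob_def Fs_def sum_distrib_right
    by (intro sum.cong refl) auto
  also have "\<dots> = (\<Sum>u\<in>V. \<Sum>v\<in>V. \<Sum>Y\<in>Pow V. if moran_update X u v = Y
        then fit r m X u / Fs V r m X * w u v * \<phi> Y else 0)"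
    by (subst sum.swap) (simp add: sum.swap[of _ "Pow V" V])
  also have "\<dots> = (\<Sum>u\<in>V. \<Sum>v\<in>V. fit r m X u / Fs V r m X * w u v * \<phi> (moran_update X u v))"
  proof (intro sum.cong refl)
    fix u v assume "u \<in> V" "v \<in> V"
    then have "moran_update X u v \<in> Pow V" using upd_sub[OF X] by auto
    then show "(\<Sum>Y\<in>Pow V. if moran_update X u v = Y
        then fit r m X u / Fs V r m X * w u v * \<phi> Y else 0) =
        fit r m X u / Fs V r m X * w u v * \<phi> (moran_update X u v)"
      using fin by (simp add: sum.delta)
  qed
  also have "\<dots> = Tm V w r m \<phi> X / Fs V r m X"
    unfolding Tm_def sum_divide_distrib sum_distrib_left
    by (intro sum.cong refl) (simp add: field_simps)
  finally show ?thesis .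
qed

lemma trans_nonneg:
  assumes fg: "fitness_graph V E w r m"
  shows "trans_prob V w r m X Y \<ge> 0"
proof -
  have "Fs V r m X > 0" using Fs_pos[OF fg] .
  have "\<And>u v. u \<in> V \<Longrightarrow> v \<in> V \<Longrightarrow> fit r m X u / Fs V r m X * w u v \<ge> 0"
    using fit_pos[OF _ fg] fg_basic(3)[OF fg] \<open>Fs V r m X > 0\<close>
    by (meson divide_nonneg_pos less_imp_le mult_nonneg_nonneg)
  then show ?thesis
    unfolding trans_prob_def Fs_def[symmetric]
    by (intro sum_nonneg) auto
qed

lemma trans_sum:
  assumes fg: "fitness_graph V E w r m" and X: "X \<subseteq> V"
  shows "(\<Sum>Y\<in>Pow V. trans_prob V w r m X Y) = 1"
proof -
  have "(\<Sum>Y\<in>Pow V. trans_prob V w r m X Y) = (\<Sum>Y\<in>Pow V. trans_prob V w r m X Y * (\<lambda>_. 1) Y)"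
    by simp
  also have "\<dots> = Tm V w r m (\<lambda>_. 1) X / Fs V r m X" by (rule step_eq[OF fg X])
  also have "Tm V w r m (\<lambda>_. 1) X = Fs V r m X"
    unfolding Tm_def Fs_def using fg_basic(4)[OF fg] by simp
  finally show ?thesis using Fs_pos[OF fg, of X] by simp
qed

lemma per_u:
  fixes \<phi> :: "'v set \<Rightarrow> real"
  assumes fg: "fitness_graph V E w r m" and u: "u \<in> V"
    and XY: "X \<subseteq> Y" "Y \<subseteq> V"
    and mono: "\<And>A B. A \<subseteq> B \<Longrightarrow> B \<subseteq> V \<Longrightarrow> \<phi> A \<le> \<phi> B"
  shows "(r u + m u - fit r m X u) * \<phi> X + fit r m X u * (\<Sum>v\<in>V. w u v * \<phi> (moran_update X u v))
    \<le> (r u + m u - fit r m Y u) * \<phi> Y + fit r m Y u * (\<Sum>v\<in>V. w u v * \<phi> (moran_update Y u v))"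
proof -
  have wpos: "\<And>v. v \<in> V \<Longrightarrow> w u v \<ge> 0" using fg_basic(3)[OF fg u] by auto
  have wsum: "(\<Sum>v\<in>V. w u v) = 1" using fg_basic(4)[OF fg u] .
  have ru: "r u > 0" and mu: "m u > 0" using fg_basic(5,6)[OF fg u] by auto
  have pXY: "\<phi> X \<le> \<phi> Y" using mono XY by auto
  show ?thesis
  proof (cases "u \<in> X")
    case True
    then have uY: "u \<in> Y" using XY by auto
    have "(\<Sum>v\<in>V. w u v * \<phi> (moran_update X u v)) \<le> (\<Sum>v\<in>V. w u v * \<phi> (moran_update Y u v))"
      using True uY XY wpos
      by (intro sum_mono mult_left_mono) (auto simp: moran_update_def intro!: mono)
    then show ?thesis using True uY pXY ru mu
      by (simp add: fit_def) (intro add_mono mult_left_mono; simp)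
  next
    case False
    show ?thesis
    proof (cases "u \<in> Y")
      case False
      have "(\<Sum>v\<in>V. w u v * \<phi> (moran_update X u v)) \<le> (\<Sum>v\<in>V. w u v * \<phi> (moran_update Y u v))"
        using \<open>u \<notin> X\<close> False XY wpos
        by (intro sum_mono mult_left_mono) (auto simp: moran_update_def intro!: mono)
      then show ?thesis using \<open>u \<notin> X\<close> False pXY ru mu
        by (simp add: fit_def) (intro add_mono mult_left_mono; simp)
    next
      case True
      have A: "(\<Sum>v\<in>V. w u v * \<phi> (moran_update X u v)) \<le> (\<Sum>v\<in>V. w u v * \<phi> X)"
        using \<open>u \<notin> X\<close> XY wpos
        by (intro sum_mono mult_left_mono) (auto simp: moran_update_def intro!: mono)
      have B: "(\<Sum>v\<in>V. w u v * \<phi> Y) \<le> (\<Sum>v\<in>V. w u v * \<phi> (moran_update Y u v))"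
        using True XY wpos
        by (intro sum_mono mult_left_mono) (auto simp: moran_update_def intro!: mono)
      have s: "\<And>c. (\<Sum>v\<in>V. w u v * c) = c" using wsum by (simp add: sum_distrib_right[symmetric])
      have A': "(\<Sum>v\<in>V. w u v * \<phi> (moran_update X u v)) \<le> \<phi> X" using A s by simp
      have B': "\<phi> Y \<le> (\<Sum>v\<in>V. w u v * \<phi> (moran_update Y u v))" using B s by simp
      have "m u * \<phi> X + r u * (\<Sum>v\<in>V. w u v * \<phi> (moran_update X u v)) \<le> m u * \<phi> X + r u * \<phi> X"
        using A' ru by (simp add: mult_left_mono)
      also have "\<dots> \<le> r u * \<phi> Y + m u * \<phi> Y" using pXY ru mu
        by (simp add: algebra_simps add_mono mult_left_mono)
      also have "\<dots> \<le> r u * \<phi> Y + m u * (\<Sum>v\<in>V. w u v * \<phi> (moran_update Y u v))"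
        using B' mu by (simp add: mult_left_mono)
      finally show ?thesis using True \<open>u \<notin> X\<close> by (simp add: fit_def)
    qed
  qed
qed

lemma key:
  fixes \<phi> :: "'v set \<Rightarrow> real"
  assumes fg: "fitness_graph V E w r m"
    and XY: "X \<subseteq> Y" "Y \<subseteq> V"
    and mono: "\<And>A B. A \<subseteq> B \<Longrightarrow> B \<subseteq> V \<Longrightarrow> \<phi> A \<le> \<phi> B"
  shows "(\<Sum>u\<in>V. r u + m u) * \<phi> X - Fs V r m X * \<phi> X + Tm V w r m \<phi> X
    \<le> (\<Sum>u\<in>V. r u + m u) * \<phi> Y - Fs V r m Y * \<phi> Y + Tm V w r m \<phi> Y"
proof -
  have eq: "\<And>Z. (\<Sum>u\<in>V. r u + m u) * \<phi> Z - Fs V r m Z * \<phi> Z + Tm V w r m \<phi> Z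
     = (\<Sum>u\<in>V. (r u + m u - fit r m Z u) * \<phi> Z + fit r m Z u * (\<Sum>v\<in>V. w u v * \<phi> (moran_update Z u v)))"
    unfolding Fs_def Tm_def by (simp add: sum.distrib sum_subtractf sum_distrib_right sum_distrib_left algebra_simps)
  show ?thesis unfolding eq
    by (intro sum_mono per_u[OF fg _ XY mono]) auto
qed

lemma Fs_le: "fitness_graph V E w r m \<Longrightarrow> Fs V r m X \<le> (\<Sum>u\<in>V. r u + m u)"
  unfolding Fs_def using fg_basic(5,6)[of V E w r m]
  by (intro sum_mono) (auto simp: fit_def intro: less_imp_le)


lemma h_bounds:
  assumes fg: "fitness_graph V E w r m"
  shows "X \<subseteq> V \<Longrightarrow> 0 \<le> hit_within V w r m n X \<and> hit_within V w r m n X \<le> 1"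
proof (induction n arbitrary: X)
  case 0
  then show ?case by simp
next
  case (Suc n)
  show ?case
  proof (cases "X = V")
    case True then show ?thesis by simp
  next
    case False
    have ih: "\<And>Y. Y \<in> Pow V \<Longrightarrow> 0 \<le> hit_within V w r m n Y \<and> hit_within V w r m n Y \<le> 1"
      using Suc.IH by auto
    have "0 \<le> (\<Sum>Y\<in>Pow V. trans_prob V w r m X Y * hit_within V w r m n Y)"
      using ih trans_nonneg[OF fg] by (intro sum_nonneg mult_nonneg_nonneg) auto
    moreover have "(\<Sum>Y\<in>Pow V. trans_prob V w r m X Y * hit_within V w r m n Y)
        \<le> (\<Sum>Y\<in>Pow V. trans_prob V w r m X Y)"
      using ih trans_nonneg[OF fg] by (intro sum_mono mult_right_le_one_le) auto
    ultimately show ?thesis using False trans_sum[OF fg Suc.prems] by simp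
  qed
qed

lemma h_mono:
  assumes fg: "fitness_graph V E w r m"
  shows "X \<subseteq> V \<Longrightarrow> hit_within V w r m n X \<le> hit_within V w r m (Suc n) X"
proof (induction n arbitrary: X)
  case 0
  show ?case
  proof (cases "X = V")
    case True then show ?thesis by simp
  next
    case False
    have "0 \<le> hit_within V w r m (Suc 0) X" using h_bounds[OF fg 0, of "Suc 0"] by blast
    then show ?thesis using False by simp
  qed
next
  case (Suc n)
  show ?case
  proof (cases "X = V")
    case True then show ?thesis by simp
  next
    case False
    have "(\<Sum>Y\<in>Pow V. trans_prob V w r m X Y * hit_within V w r m n Y)
        \<le> (\<Sum>Y\<in>Pow V. trans_prob V w r m X Y * hit_within V w r m (Suc n) Y)"
      using Suc.IH trans_nonneg[OF fg] by (intro sum_mono mult_left_mono) auto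
    then show ?thesis using False
      by (simp only: hit_within.simps(2)[of V w r m n X] hit_within.simps(2)[of V w r m "Suc n" X] if_False)
  qed
qed

lemma h_lim:
  assumes fg: "fitness_graph V E w r m" and X: "X \<subseteq> V"
  shows "((\<lambda>n. hit_within V w r m n X) \<longlongrightarrow> fp V w r m X) sequentially"
    and "hit_within V w r m n X \<le> fp V w r m X"
    and "0 \<le> fp V w r m X" "fp V w r m X \<le> 1"
proof -
  have bdd: "bdd_above (range (\<lambda>n. hit_within V w r m n X))"
    using h_bounds[OF fg X] by (intro bdd_aboveI[of _ 1]) auto
  have inc: "incseq (\<lambda>n. hit_within V w r m n X)"
    using h_mono[OF fg X] by (intro incseq_SucI) auto
  show "((\<lambda>n. hit_within V w r m n X) \<longlongrightarrow> fp V w r m X) sequentially"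
    unfolding fp_def by (rule LIMSEQ_incseq_SUP[OF bdd inc])
  show hn: "hit_within V w r m n X \<le> fp V w r m X"
    unfolding fp_def by (rule cSUP_upper[OF UNIV_I bdd])
  show "0 \<le> fp V w r m X"
  proof -
    have "0 \<le> hit_within V w r m 0 X" using h_bounds[OF fg X] by blast
    also have "\<dots> \<le> fp V w r m X" unfolding fp_def by (rule cSUP_upper[OF UNIV_I bdd])
    finally show ?thesis .
  qed
  show "fp V w r m X \<le> 1"
    unfolding fp_def using h_bounds[OF fg X] by (intro cSUP_least) auto
qed

lemma fp_V: "fp V w r m V = 1"
proof -
  have "\<And>n. hit_within V w r m n V = 1" by (case_tac n) auto
  then show ?thesis unfolding fp_def by simp
qed

lemma fp_fix:
  assumes fg: "fitness_graph V E w r m" and X: "X \<subseteq> V" "X \<noteq> V"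
  shows "(\<Sum>Y\<in>Pow V. trans_prob V w r m X Y * fp V w r m Y) = fp V w r m X"
proof -
  have "((\<lambda>n. hit_within V w r m (Suc n) X) \<longlongrightarrow> fp V w r m X) sequentially"
    using h_lim(1)[OF fg X(1)] by (rule LIMSEQ_Suc)
  moreover have "((\<lambda>n. hit_within V w r m (Suc n) X) \<longlongrightarrow>
      (\<Sum>Y\<in>Pow V. trans_prob V w r m X Y * fp V w r m Y)) sequentially"
    using X(2) by (simp del: hit_within.simps add: hit_within.simps(2))
      (intro tendsto_sum tendsto_mult_left h_lim(1)[OF fg]; auto)
  ultimately show ?thesis using LIMSEQ_unique by metis
qed

theorem corollary2:
  fixes V :: "'v set" and E :: "('v \<times> 'v) set" and w :: "'v \<Rightarrow> 'v \<Rightarrow> real"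
    and r m :: "'v \<Rightarrow> real" and S S' :: "'v set"
  assumes "fitness_graph V E w r m"
    and "S \<subseteq> S'" and "S' \<subseteq> V"
  shows "fp V w r m S \<le> fp V w r m S'"
proof -
  note fg = assms(1)
  have fin: "finite V" using fg_basic[OF fg] by auto
  let ?h = "fp V w r m"
  let ?L = "\<Sum>u\<in>V. r u + m u"
  define \<psi> where "\<psi> Z = Min (?h ` {Y. Z \<subseteq> Y \<and> Y \<subseteq> V})" for Z
  have finS: "finite {Y. Z \<subseteq> Y \<and> Y \<subseteq> V}" for Z
    using fin by (rule finite_subset[rotated, OF finite_Pow_iff[THEN iffD2]]) auto
  have psi_le: "\<psi> Z \<le> ?h Y" if "Z \<subseteq> Y" "Y \<subseteq> V" for Z Y
    unfolding \<psi>_def using that finS by (intro Min_le) auto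
  have psi_in: "\<exists>Y0. Z \<subseteq> Y0 \<and> Y0 \<subseteq> V \<and> \<psi> Z = ?h Y0" if "Z \<subseteq> V" for Z
  proof -
    have "\<psi> Z \<in> ?h ` {Y. Z \<subseteq> Y \<and> Y \<subseteq> V}"
      unfolding \<psi>_def using that finS by (intro Min_in) auto
    then show ?thesis by auto
  qed
  have psi_mono: "\<psi> A \<le> \<psi> B" if "A \<subseteq> B" "B \<subseteq> V" for A B
    using psi_in[OF that(2)] psi_le that by force
  have psi_V: "\<psi> V = 1"
    using psi_in[of V] fp_V[of V w r m] by auto
  have psi_fp: "\<psi> Z \<le> ?h Z" if "Z \<subseteq> V" for Z using psi_le that by auto
  have psi_super: "(\<Sum>Y\<in>Pow V. trans_prob V w r m X Y * \<psi> Y) \<le> \<psi> X" if X: "X \<subseteq> V" for X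
  proof -
    obtain Y0 where Y0: "X \<subseteq> Y0" "Y0 \<subseteq> V" "\<psi> X = ?h Y0" using psi_in[OF X] by blast
    have k: "?L * \<psi> X - Fs V r m X * \<psi> X + Tm V w r m \<psi> X
      \<le> ?L * \<psi> Y0 - Fs V r m Y0 * \<psi> Y0 + Tm V w r m \<psi> Y0"
      by (rule key[OF fg Y0(1,2)]) (rule psi_mono)
    have T0: "Tm V w r m \<psi> Y0 \<le> Fs V r m Y0 * ?h Y0"
    proof (cases "Y0 = V")
      case True
      have "Tm V w r m \<psi> Y0 = (\<Sum>u\<in>V. fit r m V u * (\<Sum>v\<in>V. w u v * \<psi> V))"
        unfolding Tm_def True by (intro sum.cong refl) (auto simp: moran_update_def insert_absorb)
      also have "\<dots> = Fs V r m V * \<psi> V"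
        unfolding Fs_def using fg_basic(4)[OF fg]
        by (simp add: sum_distrib_right[symmetric] sum_distrib_left)
      finally show ?thesis using True psi_V fp_V[of V w r m] by simp
    next
      case False
      have "Tm V w r m \<psi> Y0 \<le> Tm V w r m ?h Y0"
        unfolding Tm_def using fit_pos[OF _ fg] fg_basic(3)[OF fg] psi_fp upd_sub[OF Y0(2)]
        by (intro sum_mono mult_left_mono) (auto intro: less_imp_le)
      also have "Tm V w r m ?h Y0 = Fs V r m Y0 * ?h Y0"
        using step_eq[OF fg Y0(2), of ?h] fp_fix[OF fg Y0(2) False] Fs_pos[OF fg, of Y0] by simp
      finally show ?thesis .
    qed
    have "?L * \<psi> Y0 - Fs V r m Y0 * \<psi> Y0 + Tm V w r m \<psi> Y0 \<le> ?L * ?h Y0"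
    proof -
      have "(?L - Fs V r m Y0) * \<psi> Y0 \<le> (?L - Fs V r m Y0) * ?h Y0"
        using Fs_le[OF fg, of Y0] psi_fp[OF Y0(2)] by (intro mult_left_mono) auto
      then show ?thesis using T0 by (simp add: algebra_simps)
    qed
    then have "Tm V w r m \<psi> X \<le> Fs V r m X * \<psi> X" using k Y0(3) by (simp add: algebra_simps)
    then show ?thesis using step_eq[OF fg X, of \<psi>] Fs_pos[OF fg, of X]
      by (simp add: divide_le_eq mult.commute)
  qed
  have ind: "hit_within V w r m n X \<le> \<psi> X" if "X \<subseteq> V" for n X
    using that
  proof (induction n arbitrary: X)
    case 0
    obtain Y0 where "X \<subseteq> Y0" "Y0 \<subseteq> V" "\<psi> X = ?h Y0" using psi_in[OF 0] by blast
    then show ?case using psi_V h_lim(3)[OF fg, of Y0] by auto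
  next
    case (Suc n)
    show ?case
    proof (cases "X = V")
      case True then show ?thesis using psi_V by simp
    next
      case False
      have "(\<Sum>Y\<in>Pow V. trans_prob V w r m X Y * hit_within V w r m n Y)
         \<le> (\<Sum>Y\<in>Pow V. trans_prob V w r m X Y * \<psi> Y)"
        using Suc.IH trans_nonneg[OF fg] by (intro sum_mono mult_left_mono) auto
      then show ?thesis using psi_super[OF Suc.prems] False by simp
    qed
  qed
  have SV: "S \<subseteq> V" using assms by auto
  have "?h S \<le> \<psi> S"
    unfolding fp_def using ind[OF SV] by (intro cSUP_least) auto
  also have "\<dots> \<le> ?h S'" using psi_le assms by auto
  finally show ?thesis .
qed

end
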